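(* Let $n\ge1$ and let $\omega\subset\mathbb{R}^n$ be a measurable set satisfying $$\liminf_{R\to+\infty}\frac{|\omega\cap B(0,R)|}{|B(0,R)|}>0.$$ Then there exists a constant $C=C(\omega)>1$ such that for every $N\in\mathbb{N}$ and every $f\in\mathcal{E}_N$, $$\|f\|_{L^2(\mathbb{R}^n)}\le C e^{CN}\|f\|_{L^2(\omega)}.$$
   Context: $|A|$ denotes Lebesgue measure and $B(0,R)$ the open Euclidean ball of radius $R$ centered at $0$. The one-dimensional Hermite functions are $\phi_k(x)=\frac{(-1)^k}{\sqrt{2^k k!\sqrt{\pi}}}e^{x^2/2}\frac{d^k}{dx^k}(e^{-x^2})$, $k\in\mathbb{N}$. For $\alpha\in\mathbb{N}^n$, $\Phi_\alpha(x)=\prod_{j=1}^n\phi_{\alpha_j}(x_j)$ and $|\alpha|=\alpha_1+\dots+\alpha_n$. For $N\in\mathbb{N}$, $\mathcal{E}_N=\mathrm{Span}_{\mathbb{C}}\{\Phi_\alpha:\alpha\in\mathbb{N}^n,\ |\alpha|\le N\}$. *)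

theory Defs
  imports "HOL-Analysis.Analysis"
begin

definition hermite_fun :: "nat \<Rightarrow> real \<Rightarrow> real" where
  "hermite_fun k x = (-1) ^ k / sqrt (2 ^ k * fact k * sqrt pi) * exp (x\<^sup>2 / 2)
      * ((deriv ^^ k) (\<lambda>t. exp (- (t\<^sup>2))) x)"

definition hermite_multi :: "('n::finite \<Rightarrow> nat) \<Rightarrow> real ^ 'n \<Rightarrow> real" where
  "hermite_multi \<alpha> x = (\<Prod>j\<in>UNIV. hermite_fun (\<alpha> j) (x $ j))"

definition mi_length :: "('n::finite \<Rightarrow> nat) \<Rightarrow> nat" where
  "mi_length \<alpha> = (\<Sum>j\<in>UNIV. \<alpha> j)"

text \<open>E_N: complex span of the Phi_alpha with |alpha| <= N. The index set is finite,
  so the span is the set of all complex linear combinations over it.\<close>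
definition hermite_space :: "nat \<Rightarrow> (real ^ 'n::finite \<Rightarrow> complex) set" where
  "hermite_space N = {f. \<exists>c :: ('n \<Rightarrow> nat) \<Rightarrow> complex.
      f = (\<lambda>x. \<Sum>\<alpha>\<in>{\<alpha>. mi_length \<alpha> \<le> N}. c \<alpha> * complex_of_real (hermite_multi \<alpha> x))}"

definition L2_norm_on :: "(real ^ 'n::finite) set \<Rightarrow> (real ^ 'n \<Rightarrow> complex) \<Rightarrow> real" where
  "L2_norm_on A f = sqrt (LINT x : A | lebesgue. (cmod (f x))\<^sup>2)"

end

theory Submission
  imports Defs "HOL-Probability.Distributions" "HOL-Computational_Algebra.Polynomial"
begin

primrec Hp :: "nat \<Rightarrow> real poly" where
  "Hp 0 = 1" | "Hp (Suc k) = pderiv (Hp k) - [:0,2:] * Hp k"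

lemma degree_Hp: "degree (Hp k) \<le> k"
proof (induction k)
  case 0 then show ?case by simp
next
  case (Suc k)
  have "degree (pderiv (Hp k)) \<le> Suc k" using Suc by (simp add: degree_pderiv)
  moreover have "degree ([:0,2:] * Hp k) \<le> Suc k"
    using degree_mult_le[of "[:0,2:]" "Hp k"] Suc by simp
  ultimately show ?case by (simp add: degree_diff_le)
qed

lemma deriv_gauss: "(deriv ^^ k) (\<lambda>t::real. exp (- (t\<^sup>2))) = (\<lambda>t. poly (Hp k) t * exp (- (t\<^sup>2)))"
proof (induction k)
  case 0 then show ?case by simp
next
  case (Suc k)
  have "(deriv ^^ Suc k) (\<lambda>t::real. exp (- (t\<^sup>2))) = deriv (\<lambda>t. poly (Hp k) t * exp (- (t\<^sup>2)))"
    using Suc by simp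
  also have "\<dots> = (\<lambda>t. poly (Hp (Suc k)) t * exp (- (t\<^sup>2)))"
  proof
    fix t :: real
    have "((\<lambda>t. poly (Hp k) t * exp (- (t\<^sup>2))) has_real_derivative
       poly (pderiv (Hp k)) t * exp (- (t\<^sup>2)) + poly (Hp k) t * (exp (- (t\<^sup>2)) * (- (2 * t)))) (at t)"
      by (auto intro!: derivative_eq_intros poly_DERIV)
    then have "deriv (\<lambda>t. poly (Hp k) t * exp (- (t\<^sup>2))) t =
       poly (pderiv (Hp k)) t * exp (- (t\<^sup>2)) + poly (Hp k) t * (exp (- (t\<^sup>2)) * (- (2 * t)))"
      by (rule DERIV_imp_deriv)
    also have "\<dots> = poly (Hp (Suc k)) t * exp (- (t\<^sup>2))"
      by (simp add: algebra_simps)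
    finally show "deriv (\<lambda>t. poly (Hp k) t * exp (- (t\<^sup>2))) t = poly (Hp (Suc k)) t * exp (- (t\<^sup>2))" .
  qed
  finally show ?case .
qed

definition Gp :: "nat \<Rightarrow> real poly" where
  "Gp k = smult ((-1) ^ k / sqrt (2 ^ k * fact k * sqrt pi)) (Hp k)"

lemma degree_Gp: "degree (Gp k) \<le> k"
  unfolding Gp_def using degree_Hp[of k] by simp

lemma hermite_fun_eq: "hermite_fun k x = poly (Gp k) x * exp (- (x\<^sup>2) / 2)"
proof -
  have e: "exp (x\<^sup>2 / 2) * exp (- (x\<^sup>2)) = exp (- (x\<^sup>2) / 2)"
    by (simp add: exp_add[symmetric])
  show ?thesis unfolding hermite_fun_def deriv_gauss Gp_def
    using e by (simp add: algebra_simps)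
qed


definition lp :: "nat \<Rightarrow> (real ^ 'n::finite \<Rightarrow> complex) \<Rightarrow> bool" where
  "lp N P \<longleftrightarrow> (\<forall>a v. \<exists>p. degree p \<le> N \<and> (\<forall>t::real. P (a + t *\<^sub>R v) = poly p (complex_of_real t)))"

lemma lpD: "lp N P \<Longrightarrow> \<exists>p. degree p \<le> N \<and> (\<forall>t::real. P (a + t *\<^sub>R v) = poly p (complex_of_real t))"
  unfolding lp_def by blast

lemma lp_const: "lp N (\<lambda>x. c)"
  unfolding lp_def by (intro allI exI[of _ "[:c:]"]) simp

lemma lp_mono: "lp N P \<Longrightarrow> N \<le> M \<Longrightarrow> lp M P"
  unfolding lp_def by (meson order_trans)

lemma lp_add: "lp N P \<Longrightarrow> lp N Q \<Longrightarrow> lp N (\<lambda>x. P x + Q x)"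
  unfolding lp_def
proof (intro allI)
  fix a v assume P: "\<forall>a v. \<exists>p. degree p \<le> N \<and> (\<forall>t::real. P (a + t *\<^sub>R v) = poly p (complex_of_real t))"
    and Q: "\<forall>a v. \<exists>p. degree p \<le> N \<and> (\<forall>t::real. Q (a + t *\<^sub>R v) = poly p (complex_of_real t))"
  obtain p where p: "degree p \<le> N" "\<forall>t::real. P (a + t *\<^sub>R v) = poly p (complex_of_real t)" using P by blast
  obtain q where q: "degree q \<le> N" "\<forall>t::real. Q (a + t *\<^sub>R v) = poly q (complex_of_real t)" using Q by blast
  show "\<exists>r. degree r \<le> N \<and> (\<forall>t::real. P (a + t *\<^sub>R v) + Q (a + t *\<^sub>R v) = poly r (complex_of_real t))"
    by (intro exI[of _ "p + q"]) (simp add: p q degree_add_le)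
qed

lemma lp_mult: "lp N P \<Longrightarrow> lp M Q \<Longrightarrow> lp (N + M) (\<lambda>x. P x * Q x)"
  unfolding lp_def
proof (intro allI)
  fix a v assume P: "\<forall>a v. \<exists>p. degree p \<le> N \<and> (\<forall>t::real. P (a + t *\<^sub>R v) = poly p (complex_of_real t))"
    and Q: "\<forall>a v. \<exists>p. degree p \<le> M \<and> (\<forall>t::real. Q (a + t *\<^sub>R v) = poly p (complex_of_real t))"
  obtain p where p: "degree p \<le> N" "\<forall>t::real. P (a + t *\<^sub>R v) = poly p (complex_of_real t)" using P by blast
  obtain q where q: "degree q \<le> M" "\<forall>t::real. Q (a + t *\<^sub>R v) = poly q (complex_of_real t)" using Q by blast
  have "degree (p * q) \<le> N + M" using degree_mult_le[of p q] p q by simp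
  then show "\<exists>r. degree r \<le> N + M \<and> (\<forall>t::real. P (a + t *\<^sub>R v) * Q (a + t *\<^sub>R v) = poly r (complex_of_real t))"
    by (intro exI[of _ "p * q"]) (simp add: p q)
qed

lemma lp_sum_aux: "finite A \<Longrightarrow> (\<forall>a\<in>A. lp N (P a)) \<longrightarrow> lp N (\<lambda>x. \<Sum>a\<in>A. P a x)"
  by (induction A rule: finite_induct) (auto intro: lp_add lp_const)

lemma lp_sum: "(\<And>a. a \<in> A \<Longrightarrow> lp N (P a)) \<Longrightarrow> lp N (\<lambda>x. \<Sum>a\<in>A. P a x)"
proof (cases "finite A")
  case True
  assume "\<And>a. a \<in> A \<Longrightarrow> lp N (P a)"
  then show ?thesis using True lp_sum_aux by blast
next
  case False then show ?thesis by (simp add: lp_const)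
qed

lemma lp_prod: "finite A \<Longrightarrow> (\<And>a. a \<in> A \<Longrightarrow> lp (d a) (P a)) \<Longrightarrow> lp (\<Sum>a\<in>A. d a) (\<lambda>x. \<Prod>a\<in>A. P a x)"
  by (induction A rule: finite_induct) (auto intro: lp_mult lp_const)

lemma poly_map_of_real: "poly (map_poly complex_of_real p) (complex_of_real t) = complex_of_real (poly p t)"
  by (induct p) (simp_all add: map_poly_pCons)

lemma lp_coord:
  assumes "degree h \<le> k"
  shows "lp k (\<lambda>x::real^'n::finite. complex_of_real (poly h (x $ j)))"
  unfolding lp_def
proof (intro allI)
  fix a v :: "real^'n"
  let ?p = "map_poly complex_of_real (h \<circ>\<^sub>p [:a $ j, v $ j:])"
  have "degree ?p \<le> degree (h \<circ>\<^sub>p [:a $ j, v $ j:])" by (rule map_poly_degree_leq)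
  also have "\<dots> \<le> degree h * degree [:a $ j, v $ j:]" by (rule degree_pcompose_le)
  also have "\<dots> \<le> k" using assms by (cases "v $ j = 0") auto
  finally show "\<exists>p. degree p \<le> k \<and> (\<forall>t::real. complex_of_real (poly h ((a + t *\<^sub>R v) $ j)) = poly p (complex_of_real t))"
    by (intro exI[of _ ?p]) (simp add: poly_map_of_real poly_pcompose algebra_simps)
qed

lemma norm_sq_vec: "(norm (x :: real ^ 'n::finite))\<^sup>2 = (\<Sum>j\<in>UNIV. (x $ j)\<^sup>2)"
  by (simp only: power2_norm_eq_inner) (simp add: inner_vec_def power2_eq_square)

lemma hermite_multi_eq:
  "hermite_multi \<alpha> x = (\<Prod>j\<in>UNIV. poly (Gp (\<alpha> j)) (x $ j)) * exp (- (norm x)\<^sup>2 / 2)"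
proof -
  have "hermite_multi \<alpha> x = (\<Prod>j\<in>UNIV. poly (Gp (\<alpha> j)) (x $ j)) * (\<Prod>j\<in>UNIV. exp (- (x $ j)\<^sup>2 / 2))"
    unfolding hermite_multi_def hermite_fun_eq by (simp add: prod.distrib)
  also have "(\<Prod>j\<in>UNIV. exp (- (x $ j)\<^sup>2 / 2)) = exp (\<Sum>j\<in>UNIV. - (x $ j)\<^sup>2 / 2)"
    by (simp add: exp_sum)
  also have "(\<Sum>j\<in>UNIV. - (x $ j)\<^sup>2 / 2) = - (norm x)\<^sup>2 / 2"
    by (simp add: norm_sq_vec sum_negf sum_divide_distrib)
  finally show ?thesis .
qed

definition hpol :: "nat \<Rightarrow> (real ^ 'n::finite \<Rightarrow> complex) \<Rightarrow> bool" where
  "hpol N P \<longleftrightarrow> lp N P \<and> continuous_on UNIV P"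

lemma hermite_space_repr:
  fixes f :: "real ^ 'n::finite \<Rightarrow> complex"
  assumes "f \<in> hermite_space N"
  shows "\<exists>P. hpol N P \<and> f = (\<lambda>x. P x * complex_of_real (exp (- (norm x)\<^sup>2 / 2)))"
proof -
  obtain c where c: "f = (\<lambda>x. \<Sum>\<alpha>\<in>{\<alpha>. mi_length \<alpha> \<le> N}. c \<alpha> * complex_of_real (hermite_multi \<alpha> x))"
    using assms unfolding hermite_space_def by blast
  define Q where "Q \<alpha> x = (\<Prod>j\<in>UNIV. complex_of_real (poly (Gp (\<alpha> j)) (x $ j)))" for \<alpha> and x :: "real^'n"
  define P where "P x = (\<Sum>\<alpha>\<in>{\<alpha>. mi_length \<alpha> \<le> N}. c \<alpha> * Q \<alpha> x)" for x
  have "f = (\<lambda>x. P x * complex_of_real (exp (- (norm x)\<^sup>2 / 2)))"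
    unfolding c P_def Q_def hermite_multi_eq by (simp add: sum_distrib_right mult.assoc)
  moreover have "lp N P"
    unfolding P_def
  proof (rule lp_sum)
    fix \<alpha> :: "'n \<Rightarrow> nat" assume "\<alpha> \<in> {\<alpha>. mi_length \<alpha> \<le> N}"
    then have le: "(\<Sum>j\<in>UNIV. \<alpha> j) \<le> N" by (simp add: mi_length_def)
    have "lp (\<Sum>j\<in>UNIV. \<alpha> j) (Q \<alpha>)"
      unfolding Q_def by (rule lp_prod) (auto intro: lp_coord degree_Gp)
    then have "lp N (Q \<alpha>)" using le by (rule lp_mono)
    then have "lp (0 + N) (\<lambda>x. c \<alpha> * Q \<alpha> x)"
      by (intro lp_mult lp_const)
    then show "lp N (\<lambda>x. c \<alpha> * Q \<alpha> x)" by simp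
  qed
  moreover have "continuous_on UNIV P"
    unfolding P_def Q_def by (intro continuous_intros)
  ultimately show ?thesis unfolding hpol_def by blast
qed


lemma lagrange_interp:
  fixes q :: "complex poly" and z :: "nat \<Rightarrow> complex"
  assumes dq: "degree q \<le> N" and inj: "inj_on z {..N}"
  shows "poly q w = (\<Sum>i\<le>N. poly q (z i) * (\<Prod>j\<in>{..N}-{i}. (w - z j) / (z i - z j)))"
proof -
  define L where "L = (\<Sum>i\<le>N. smult (poly q (z i) / (\<Prod>j\<in>{..N}-{i}. (z i - z j))) (\<Prod>j\<in>{..N}-{i}. [:- z j, 1:]))"
  have polyL: "poly L w = (\<Sum>i\<le>N. poly q (z i) * (\<Prod>j\<in>{..N}-{i}. (w - z j) / (z i - z j)))" for w
    unfolding L_def by (simp add: poly_sum poly_prod prod_dividef)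
  have cardi: "card ({..N}-{i}) = N" if "i \<le> N" for i
    using that by (simp add: card_Diff_singleton)
  have dL: "degree L \<le> N"
    unfolding L_def
  proof (rule degree_sum_le)
    fix i assume i: "i \<in> {..N}"
    have "degree (\<Prod>j\<in>{..N}-{i}. [:- z j, 1:]) \<le> (\<Sum>j\<in>{..N}-{i}. (degree \<circ> (\<lambda>j. [:- z j, 1:])) j)"
      by (rule degree_prod_sum_le) simp
    also have "\<dots> = N" using cardi[of i] i by simp
    finally show "degree (smult (poly q (z i) / (\<Prod>j\<in>{..N}-{i}. (z i - z j))) (\<Prod>j\<in>{..N}-{i}. [:- z j, 1:])) \<le> N"
      by (meson degree_smult_le order_trans)
  qed simp
  have roots: "poly (q - L) (z k) = 0" if k: "k \<le> N" for k
  proof -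
    have "poly L (z k) = (\<Sum>i\<le>N. if i = k then poly q (z k) else 0)"
      unfolding polyL
    proof (rule sum.cong[OF refl])
      fix i assume i: "i \<in> {..N}"
      show "poly q (z i) * (\<Prod>j\<in>{..N}-{i}. (z k - z j) / (z i - z j)) = (if i = k then poly q (z k) else 0)"
      proof (cases "i = k")
        case True
        have "(\<Prod>j\<in>{..N}-{i}. (z k - z j) / (z i - z j)) = (\<Prod>j\<in>{..N}-{i}. 1)"
        proof (rule prod.cong[OF refl])
          fix j assume "j \<in> {..N}-{i}"
          then have "z i \<noteq> z j" using inj i by (auto dest: inj_onD)
          then show "(z k - z j) / (z i - z j) = 1" using True by simp
        qed
        then show ?thesis using True by simp
      next
        case False
        have "k \<in> {..N}-{i}" using k False by auto
        then have "(\<Prod>j\<in>{..N}-{i}. (z k - z j) / (z i - z j)) = 0"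
          by (intro prod_zero) auto
        then show ?thesis using False by simp
      qed
    qed
    also have "\<dots> = poly q (z k)" using k by simp
    finally show ?thesis by simp
  qed
  have "q - L = 0"
  proof (rule ccontr)
    assume ne: "q - L \<noteq> 0"
    have "z ` {..N} \<subseteq> {x. poly (q - L) x = 0}" using roots by auto
    then have "card (z ` {..N}) \<le> card {x. poly (q - L) x = 0}"
      by (intro card_mono poly_roots_finite ne)
    also have "\<dots> \<le> degree (q - L)" by (rule card_poly_roots_bound[OF ne])
    also have "\<dots> \<le> N" using dq dL by (simp add: degree_diff_le)
    finally show False using card_image[OF inj] by simp
  qed
  then have "q = L" by simp
  then have "poly q w = poly L w" by simp
  also have "\<dots> = (\<Sum>i\<le>N. poly q (z i) * (\<Prod>j\<in>{..N}-{i}. (w - z j) / (z i - z j)))"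
    by (rule polyL)
  finally show ?thesis .
qed

lemma fact_prod_left: "(\<Prod>j<i. real i - real j) = fact i"
proof (induction i)
  case 0 then show ?case by simp
next
  case (Suc i)
  have "(\<Prod>j<Suc i. real (Suc i) - real j) = (real (Suc i) - real 0) * (\<Prod>j<i. real (Suc i) - real (Suc j))"
    by (rule prod.lessThan_Suc_shift)
  also have "(\<Prod>j<i. real (Suc i) - real (Suc j)) = (\<Prod>j<i. real i - real j)" by simp
  finally show ?case using Suc by simp
qed

lemma fact_prod_right: "i \<le> N \<Longrightarrow> (\<Prod>j\<in>{i<..N}. real j - real i) = fact (N - i)"
proof (induction N)
  case 0 then show ?case by simp
next
  case (Suc N)
  show ?case
  proof (cases "i = Suc N")
    case True then show ?thesis by simp
  next
    case False
    then have iN: "i \<le> N" using Suc.prems by simp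
    have "{i<..Suc N} = insert (Suc N) {i<..N}" using iN by auto
    then have "(\<Prod>j\<in>{i<..Suc N}. real j - real i) = (real (Suc N) - real i) * (\<Prod>j\<in>{i<..N}. real j - real i)"
      by simp
    also have "\<dots> = (real (Suc N) - real i) * fact (N - i)" using Suc.IH iN by simp
    also have "\<dots> = fact (Suc N - i)"
      using iN by (simp add: Suc_diff_le fact_Suc of_nat_diff)
    finally show ?thesis .
  qed
qed

lemma prod_dist_fact:
  assumes "i \<le> N"
  shows "(\<Prod>j\<in>{..N}-{i}. \<bar>real i - real j\<bar>) = fact i * fact (N - i)"
proof -
  have split: "{..N}-{i} = {..<i} \<union> {i<..N}" using assms by auto
  have "(\<Prod>j\<in>{..N}-{i}. \<bar>real i - real j\<bar>) = (\<Prod>j\<in>{..<i}. \<bar>real i - real j\<bar>) * (\<Prod>j\<in>{i<..N}. \<bar>real i - real j\<bar>)"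
    unfolding split by (rule prod.union_disjoint) auto
  also have "(\<Prod>j\<in>{..<i}. \<bar>real i - real j\<bar>) = (\<Prod>j<i. real i - real j)"
    by (rule prod.cong) auto
  also have "(\<Prod>j\<in>{i<..N}. \<bar>real i - real j\<bar>) = (\<Prod>j\<in>{i<..N}. real j - real i)"
    by (rule prod.cong) auto
  finally show ?thesis using fact_prod_left fact_prod_right[OF assms] by simp
qed

lemma fact_lower: "i \<le> N \<Longrightarrow> fact N / 2 ^ N \<le> (fact i * fact (N - i) :: real)"
proof -
  assume i: "i \<le> N"
  have "fact i * fact (N - i) * (N choose i) = (fact N :: nat)" by (rule binomial_fact_lemma[OF i])
  then have e: "real (fact i * fact (N - i)) * real (N choose i) = fact N"
    by (metis of_nat_fact of_nat_mult)
  have "real (N choose i) \<le> 2 ^ N" using binomial_le_pow2[of N i]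
    by (metis of_nat_le_iff of_nat_numeral of_nat_power)
  moreover have "real (N choose i) > 0" using i by simp
  ultimately have "fact N / 2 ^ N \<le> fact N / real (N choose i)"
    by (intro divide_left_mono) auto
  also have "\<dots> = real (fact i * fact (N - i))" using e \<open>real (N choose i) > 0\<close>
    by (simp add: field_simps)
  finally show ?thesis by simp
qed

lemma pow_fact_le_exp: "0 \<le> (x::real) \<Longrightarrow> x ^ n / fact n \<le> exp x"
proof -
  assume x: "0 \<le> x"
  have s: "(\<lambda>n. x^n /\<^sub>R fact n) sums exp x" by (rule exp_converges)
  have "sum (\<lambda>n. x^n /\<^sub>R fact n) {n} \<le> suminf (\<lambda>n. x^n /\<^sub>R fact n)"
    by (rule sum_le_suminf) (use s x in \<open>auto simp: sums_iff\<close>)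
  then show ?thesis using s by (simp add: sums_iff divide_inverse mult.commute)
qed


lemma fmeas_bounded: "A \<in> sets borel \<Longrightarrow> bounded A \<Longrightarrow> A \<in> fmeasurable lborel"
  using emeasure_bounded_finite[of A] by (intro fmeasurableI) auto

lemma select_points:
  fixes T :: "real set"
  assumes cl: "closed T" and bd: "bounded T" and mT: "measure lborel T = \<tau>" and tp: "\<tau> > 0"
  shows "\<exists>xs. (\<forall>i\<le>N. xs i \<in> T) \<and> (\<forall>i\<le>N. \<forall>j\<le>N. \<bar>real i - real j\<bar> * (\<tau> / (N+1)) \<le> \<bar>xs i - xs j\<bar>)"
proof -
  obtain B where B: "\<forall>x\<in>T. \<bar>x\<bar> \<le> B" using bd unfolding bounded_iff by auto
  define F where "F t = measure lborel (T \<inter> {..t})" for t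
  have Tb: "T \<in> sets borel" using cl by (simp add: borel_closed)
  have fm: "T \<inter> X \<in> fmeasurable lborel" if "X \<in> sets borel" for X
    using Tb that bd by (intro fmeas_bounded) (auto intro: bounded_subset)
  have Fadd: "F t = F s + measure lborel (T \<inter> {s<..t})" if st: "s \<le> t" for s t
  proof -
    have "T \<inter> {..t} = (T \<inter> {..s}) \<union> (T \<inter> {s<..t})" using st by auto
    moreover have "measure lborel ((T \<inter> {..s}) \<union> (T \<inter> {s<..t})) = F s + measure lborel (T \<inter> {s<..t})"
      unfolding F_def using fm[of "{..s}"] fm[of "{s<..t}"]
      by (intro measure_Union) (auto simp: fmeasurable_def)
    ultimately show ?thesis unfolding F_def by simp
  qed
  have Fle: "measure lborel (T \<inter> {s<..t}) \<le> t - s" if st: "s \<le> t" for s t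
  proof -
    have "measure lborel (T \<inter> {s<..t}) \<le> measure lborel {s<..t}"
      using fm[of "{s<..t}"] by (intro measure_mono_fmeasurable) (auto intro: fmeas_bounded)
    then show ?thesis using st by simp
  qed
  have Flip: "\<bar>F t - F s\<bar> \<le> \<bar>t - s\<bar>" for s t
  proof (cases "s \<le> t")
    case True then show ?thesis using Fadd[OF True] Fle[OF True] by simp
  next
    case False then have "t \<le> s" by simp
    then show ?thesis using Fadd[OF \<open>t \<le> s\<close>] Fle[OF \<open>t \<le> s\<close>] by simp
  qed
  have Fmono: "F s \<le> F t" if "s \<le> t" for s t using Fadd[OF that] by simp
  have Flow: "F t = 0" if "t < - B" for t
  proof -
    have "T \<inter> {..t} = {}" using B that by force
    then show ?thesis unfolding F_def by simp
  qed
  have Fhigh: "F B = \<tau>"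
  proof -
    have "T \<inter> {..B} = T" using B by auto
    then show ?thesis unfolding F_def using mT by simp
  qed
  have Fcont: "continuous_on UNIV F"
    unfolding continuous_on_iff
  proof (intro ballI allI impI)
    fix x e :: real assume "0 < e"
    then show "\<exists>d>0. \<forall>x'\<in>UNIV. dist x' x < d \<longrightarrow> dist (F x') (F x) < e"
      using Flip by (intro exI[of _ e]) (auto simp: dist_real_def intro: le_less_trans)
  qed
  define c where "c i = (real i + 1/2) * (\<tau> / (N+1))" for i
  define xs where "xs i = Inf {t. c i \<le> F t}" for i
  have key: "xs i \<in> T \<and> F (xs i) = c i" if i: "i \<le> N" for i
  proof -
    let ?A = "{t. c i \<le> F t}"
    have c0: "c i > 0" using tp unfolding c_def by (intro mult_pos_pos divide_pos_pos) auto
    have r: "(real i + 1/2) / (real N + 1) < 1" using i by (simp add: field_simps)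
    have "c i = \<tau> * ((real i + 1/2) / (real N + 1))" unfolding c_def by (simp add: field_simps add.commute)
    also have "\<dots> < \<tau> * 1" using r tp by (intro mult_strict_left_mono) auto
    finally have ct: "c i < \<tau>" by simp
    have ne: "?A \<noteq> {}" using Fhigh ct by (auto intro!: exI[of _ B])
    have bdd: "bdd_below ?A"
    proof (rule bdd_belowI[of _ "- B - 1"])
      fix t assume "t \<in> ?A"
      then show "- B - 1 \<le> t" using Flow[of t] c0 by (cases "t < - B") auto
    qed
    have clA: "closed ?A" using Fcont by (intro closed_Collect_le) auto
    have inA: "xs i \<in> ?A" unfolding xs_def using closed_contains_Inf[OF ne bdd clA] .
    have lower: "xs i \<le> t" if "t \<in> ?A" for t unfolding xs_def by (rule cInf_lower[OF that bdd])
    have Fx: "F (xs i) = c i"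
    proof (rule ccontr)
      assume "F (xs i) \<noteq> c i"
      then have gt: "F (xs i) > c i" using inA by simp
      define t where "t = xs i - (F (xs i) - c i) / 2"
      have u: "xs i - t = (F (xs i) - c i) / 2" unfolding t_def by simp
      have up: "\<bar>xs i - t\<bar> = xs i - t" using u gt by simp
      have "F (xs i) - F t \<le> \<bar>F (xs i) - F t\<bar>" by simp
      then have "F (xs i) - F t \<le> xs i - t" using Flip[of "xs i" t] up by linarith
      then have "t \<in> ?A" using u gt by simp
      then have "xs i \<le> t" by (rule lower)
      then show False unfolding t_def using gt by simp
    qed
    have "xs i \<in> T"
    proof (rule ccontr)
      assume nT: "xs i \<notin> T"
      obtain e where e: "e > 0" "ball (xs i) e \<subseteq> - T"
        using cl nT open_contains_ball[of "- T"] by (auto simp: open_Compl)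
      define t where "t = xs i - e / 2"
      have "T \<inter> {t<..xs i} = {}"
      proof -
        have "{t<..xs i} \<subseteq> ball (xs i) e" unfolding t_def using e by (auto simp: dist_real_def)
        then show ?thesis using e by auto
      qed
      then have "F (xs i) = F t" using Fadd[of t "xs i"] unfolding t_def using e by simp
      then have "t \<in> ?A" using Fx by simp
      then have "xs i \<le> t" by (rule lower)
      then show False unfolding t_def using e by simp
    qed
    then show ?thesis using Fx by simp
  qed
  show ?thesis
  proof (intro exI[of _ xs] conjI allI impI)
    fix i assume "i \<le> N" then show "xs i \<in> T" using key by blast
  next
    fix i j assume i: "i \<le> N" and j: "j \<le> N"
    have cd: "c i - c j = (real i - real j) * (\<tau> / (N+1))" unfolding c_def by (simp add: algebra_simps diff_divide_distrib)
    have "\<bar>real i - real j\<bar> * (\<tau> / (N+1)) = \<bar>c i - c j\<bar>"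
      unfolding cd using tp by (simp add: abs_mult)
    also have "\<dots> = \<bar>F (xs i) - F (xs j)\<bar>" using key[OF i] key[OF j] by simp
    also have "\<dots> \<le> \<bar>xs i - xs j\<bar>" by (rule Flip)
    finally show "\<bar>real i - real j\<bar> * (\<tau> / (N+1)) \<le> \<bar>xs i - xs j\<bar>" .
  qed
qed


lemma remez1:
  fixes q :: "complex poly" and T :: "real set"
  assumes dq: "degree q \<le> N" and cl: "closed T" and bd: "bounded T"
    and mT: "measure lborel T = \<tau>" and tp: "\<tau> > 0"
    and bnd: "\<forall>t\<in>T. cmod (poly q (complex_of_real t)) \<le> m" and Dx: "\<forall>t\<in>T. \<bar>t - x\<bar> \<le> D"
  shows "cmod (poly q (complex_of_real x)) \<le> m * (N+1) * exp (N+1) * (2*D/\<tau>)^N"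
proof -
  obtain xs where xsT: "\<forall>i\<le>N. xs i \<in> T"
    and sep: "\<forall>i\<le>N. \<forall>j\<le>N. \<bar>real i - real j\<bar> * (\<tau> / (N+1)) \<le> \<bar>xs i - xs j\<bar>"
    using select_points[OF cl bd mT tp, of N] by blast
  define h where "h = \<tau> / (N+1)"
  have hp: "h > 0" unfolding h_def using tp by simp
  have Tne: "T \<noteq> {}" using mT tp by auto
  then obtain t0 where t0: "t0 \<in> T" by auto
  have m0: "0 \<le> m" using bnd t0 by (meson norm_ge_zero order_trans)
  have D0: "0 \<le> D" using Dx t0 by (meson abs_ge_zero order_trans)
  have sepij: "h * \<bar>real i - real j\<bar> \<le> \<bar>xs i - xs j\<bar>" if "i \<le> N" "j \<le> N" for i j
    using sep that unfolding h_def by (simp add: mult.commute)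
  have posij: "0 < h * \<bar>real i - real j\<bar>" if "i \<noteq> j" for i j
    using hp that by simp
  define z where "z i = complex_of_real (xs i)" for i
  have inj: "inj_on z {..N}"
  proof (rule inj_onI)
    fix i j assume i: "i \<in> {..N}" and j: "j \<in> {..N}" and e: "z i = z j"
    show "i = j"
    proof (rule ccontr)
      assume "i \<noteq> j"
      then have "0 < \<bar>xs i - xs j\<bar>" using sepij[of i j] posij[of i j] i j by simp
      then show False using e unfolding z_def by simp
    qed
  qed
  have lag: "poly q (complex_of_real x) = (\<Sum>i\<le>N. poly q (z i) * (\<Prod>j\<in>{..N}-{i}. (complex_of_real x - z j) / (z i - z j)))"
    by (rule lagrange_interp[OF dq inj])
  define K where "K = m * (D ^ N * 2 ^ N / (h ^ N * fact N))"
  have trm: "cmod (poly q (z i) * (\<Prod>j\<in>{..N}-{i}. (complex_of_real x - z j) / (z i - z j))) \<le> K"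
    if i: "i \<le> N" for i
  proof -
    have c: "card ({..N}-{i}) = N" using i by (simp add: card_Diff_singleton)
    have eq: "(\<Prod>j\<in>{..N}-{i}. (complex_of_real x - z j) / (z i - z j)) =
        complex_of_real (\<Prod>j\<in>{..N}-{i}. (x - xs j) / (xs i - xs j))"
      unfolding z_def by simp
    have "\<bar>\<Prod>j\<in>{..N}-{i}. (x - xs j) / (xs i - xs j)\<bar> = (\<Prod>j\<in>{..N}-{i}. \<bar>x - xs j\<bar> / \<bar>xs i - xs j\<bar>)"
      by (simp add: abs_prod abs_divide)
    also have "\<dots> \<le> (\<Prod>j\<in>{..N}-{i}. D / (h * \<bar>real i - real j\<bar>))"
    proof (rule prod_mono)
      fix j assume j: "j \<in> {..N}-{i}"
      have "\<bar>x - xs j\<bar> \<le> D" using Dx xsT j by (metis DiffD1 abs_minus_commute atMost_iff)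
      moreover have "h * \<bar>real i - real j\<bar> \<le> \<bar>xs i - xs j\<bar>" using sepij[of i j] i j by simp
      moreover have "0 < h * \<bar>real i - real j\<bar>" using posij[of i j] j by simp
      ultimately show "0 \<le> \<bar>x - xs j\<bar> / \<bar>xs i - xs j\<bar> \<and> \<bar>x - xs j\<bar> / \<bar>xs i - xs j\<bar> \<le> D / (h * \<bar>real i - real j\<bar>)"
        using D0 by (auto intro: frac_le)
    qed
    also have "\<dots> = D ^ N / (h ^ N * (fact i * fact (N - i)))"
      by (simp add: prod_dividef prod.distrib c prod_dist_fact[OF i])
    also have "\<dots> \<le> D ^ N / (h ^ N * (fact N / 2 ^ N))"
      using fact_lower[OF i] hp D0 by (intro divide_left_mono mult_left_mono mult_pos_pos) auto
    also have "\<dots> = D ^ N * 2 ^ N / (h ^ N * fact N)" by simp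
    finally have pb: "\<bar>\<Prod>j\<in>{..N}-{i}. (x - xs j) / (xs i - xs j)\<bar> \<le> D ^ N * 2 ^ N / (h ^ N * fact N)" .
    have "cmod (poly q (z i) * (\<Prod>j\<in>{..N}-{i}. (complex_of_real x - z j) / (z i - z j)))
        = cmod (poly q (z i)) * \<bar>\<Prod>j\<in>{..N}-{i}. (x - xs j) / (xs i - xs j)\<bar>"
      by (subst eq) (simp only: norm_mult norm_of_real)
    also have "\<dots> \<le> m * (D ^ N * 2 ^ N / (h ^ N * fact N))"
      using bnd xsT i pb m0 unfolding z_def by (intro mult_mono) auto
    finally show ?thesis unfolding K_def .
  qed
  have "cmod (poly q (complex_of_real x)) \<le> (\<Sum>i\<le>N. cmod (poly q (z i) * (\<Prod>j\<in>{..N}-{i}. (complex_of_real x - z j) / (z i - z j))))"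
    unfolding lag by (rule norm_sum)
  also have "\<dots> \<le> (\<Sum>i\<le>N. K)" using trm by (intro sum_mono) auto
  also have "\<dots> = (N+1) * K" by simp
  finally have c1: "cmod (poly q (complex_of_real x)) \<le> (N+1) * K" .
  have kk: "K = m * (2*D/\<tau>)^N * ((real N + 1) ^ N / fact N)"
    unfolding K_def h_def using tp by (simp add: power_divide power_mult_distrib field_simps)
  have "(real N + 1) ^ N / fact N = (real N + 1) ^ (N+1) / fact (N+1)"
  proof -
    have "(real N + 1) ^ (N+1) / fact (N+1) = ((real N + 1) * (real N + 1) ^ N) / ((real N + 1) * fact N)"
      by (simp only: fact_Suc Suc_eq_plus1[symmetric] power_Suc of_nat_Suc) (simp add: add.commute)
    also have "\<dots> = (real N+1)^N / fact N" by (rule mult_divide_mult_cancel_left) simp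
    finally show ?thesis by simp
  qed
  also have "\<dots> \<le> exp (real N + 1)" using pow_fact_le_exp[of "real N + 1" "N+1"] by simp
  finally have e: "(real N + 1) ^ N / fact N \<le> exp (real N + 1)" .
  have "0 \<le> m * (2 * D / \<tau>) ^ N" using m0 D0 tp by simp
  then have "K \<le> m * (2*D/\<tau>)^N * exp (real N + 1)" unfolding kk using e by (intro mult_left_mono)
  then have "(N+1) * K \<le> (N+1) * (m * (2*D/\<tau>)^N * exp (real N + 1))" by (intro mult_left_mono) auto
  with c1 show ?thesis by (simp add: algebra_simps)
qed


lemma extrap:
  fixes P :: "real^'n::finite \<Rightarrow> complex"
  assumes lp: "lp N P" and R: "R > 0" and bnd: "\<forall>y\<in>cball 0 R. cmod (P y) \<le> M"
  shows "cmod (P x) \<le> M * (real N + 1) * exp (real N + 1) * ((norm x + R) / R) ^ N"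
proof (cases "x = 0")
  case True
  have M0: "0 \<le> M" using bnd R by (metis centre_in_cball less_le norm_ge_zero order_trans)
  have "1 \<le> (real N + 1) * exp (real N + 1) * ((norm x + R) / R) ^ N"
  proof -
    have "1 \<le> exp (real N + 1)" by simp
    also have "\<dots> = 1 * exp (real N + 1)" by simp
    also have "\<dots> \<le> (real N + 1) * exp (real N + 1)" by (intro mult_right_mono) auto
    finally show ?thesis using True R by simp
  qed
  then have "M * 1 \<le> M * ((real N + 1) * exp (real N + 1) * ((norm x + R) / R) ^ N)"
    using M0 by (intro mult_left_mono) auto
  moreover have "cmod (P x) \<le> M" using bnd True R by simp
  ultimately show ?thesis by (simp add: algebra_simps)
next
  case False
  then have nx: "norm x > 0" by simp
  obtain p where dp: "degree p \<le> N" and pe: "\<forall>t::real. P (0 + t *\<^sub>R x) = poly p (complex_of_real t)"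
    using lpD[OF lp] by blast
  define T where "T = {- R / norm x .. R / norm x}"
  have mT: "measure lborel T = 2 * R / norm x" unfolding T_def using R nx by simp
  have tp: "2 * R / norm x > 0" using R nx by simp
  have bT: "\<forall>t\<in>T. cmod (poly p (complex_of_real t)) \<le> M"
  proof
    fix t assume "t \<in> T"
    then have "\<bar>t\<bar> * norm x \<le> R" unfolding T_def using nx by (auto simp: field_simps abs_le_iff)
    then have "t *\<^sub>R x \<in> cball 0 R" by simp
    then have "cmod (P (t *\<^sub>R x)) \<le> M" using bnd by blast
    then show "cmod (poly p (complex_of_real t)) \<le> M" using pe[rule_format, of t] by simp
  qed
  have DT: "\<forall>t\<in>T. \<bar>t - 1\<bar> \<le> 1 + R / norm x" unfolding T_def by auto
  have "cmod (poly p (complex_of_real 1)) \<le> M * (real N + 1) * exp (real N + 1) * (2 * (1 + R / norm x) / (2 * R / norm x)) ^ N"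
    by (rule remez1[OF dp _ _ mT tp bT DT]) (auto simp: T_def)
  also have "2 * (1 + R / norm x) / (2 * R / norm x) = (norm x + R) / R"
    using nx R by (simp add: field_simps)
  finally show ?thesis using pe[rule_format, of 1] by simp
qed


lemma line_sublevel:
  fixes P :: "real^'n::finite \<Rightarrow> complex"
  assumes lp: "lp N P" and Ma: "cmod (P a) = M" and Mp: "M > 0" and r0: "0 < \<rho>" and r1: "\<rho> < 1"
  shows "measure lborel {t\<in>{0..1}. cmod (P (a + t *\<^sub>R v)) \<le> \<rho>^(N+1) / ((real N + 1) * exp (real N + 1) * 2^N) * M} \<le> \<rho>"
proof -
  define \<epsilon> where "\<epsilon> = \<rho>^(N+1) / ((real N + 1) * exp (real N + 1) * 2^N)"
  obtain p where dp: "degree p \<le> N" and pe: "\<forall>t::real. P (a + t *\<^sub>R v) = poly p (complex_of_real t)"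
    using lpD[OF lp] by blast
  define T where "T = {t\<in>{0..1}. cmod (poly p (complex_of_real t)) \<le> \<epsilon> * M}"
  have Teq: "{t\<in>{0..1}. cmod (P (a + t *\<^sub>R v)) \<le> \<epsilon> * M} = T" unfolding T_def using pe by simp
  have clT: "closed T"
  proof -
    have "T = {0..1} \<inter> {t. cmod (poly p (complex_of_real t)) \<le> \<epsilon> * M}" unfolding T_def by auto
    also have "closed \<dots>" by (intro closed_Int closed_real_atLeastAtMost closed_Collect_le continuous_intros)
    finally show ?thesis .
  qed
  have bT: "bounded T" unfolding T_def by (rule bounded_subset[of "{0..1}"]) auto
  define \<tau> where "\<tau> = measure lborel T"
  have "\<tau> \<le> \<rho>"
  proof (cases "\<tau> > 0")
    case False then show ?thesis using r0 by simp
  next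
    case True
    have bnd: "\<forall>t\<in>T. cmod (poly p (complex_of_real t)) \<le> \<epsilon> * M" unfolding T_def by auto
    have D: "\<forall>t\<in>T. \<bar>t - 0\<bar> \<le> 1" unfolding T_def by auto
    have "cmod (poly p (complex_of_real 0)) \<le> \<epsilon> * M * (real N + 1) * exp (real N + 1) * (2 * 1 / \<tau>) ^ N"
      by (rule remez1[OF dp clT bT \<tau>_def[symmetric] True bnd D])
    also have "\<epsilon> * M * (real N + 1) * exp (real N + 1) * (2 * 1 / \<tau>) ^ N = M * (\<rho>^(N+1) / \<tau>^N)"
    proof -
      have cE: "(real N + 1) * exp (real N + 1) * 2^N > 0" by simp
      have e1: "\<epsilon> * ((real N + 1) * exp (real N + 1) * 2^N) = \<rho>^(N+1)"
        unfolding \<epsilon>_def using cE by simp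
      have "\<epsilon> * M * (real N + 1) * exp (real N + 1) * (2 * 1 / \<tau>) ^ N =
          (\<epsilon> * ((real N + 1) * exp (real N + 1) * 2^N)) * M / \<tau>^N"
        by (simp add: power_divide mult_ac)
      then show ?thesis using e1 by simp
    qed
    finally have "M \<le> M * (\<rho>^(N+1) / \<tau>^N)" using pe[rule_format, of 0] Ma by simp
    then have "1 \<le> \<rho>^(N+1) / \<tau>^N" using Mp by (metis mult.right_neutral mult_le_cancel_left_pos)
    then have le: "\<tau>^N \<le> \<rho>^(N+1)" using True by (simp add: field_simps)
    show ?thesis
    proof (rule ccontr)
      assume "\<not> \<tau> \<le> \<rho>"
      then have "\<rho>^N \<le> \<tau>^N" using r0 by (intro power_mono) auto
      moreover have "\<rho>^(N+1) < \<rho>^N" using r0 r1 by (simp add: power_strict_decreasing_iff)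
      ultimately show False using le by simp
    qed
  qed
  then show ?thesis unfolding \<epsilon>_def[symmetric] Teq \<tau>_def .
qed


lemma closed_pre: "closed S \<Longrightarrow> continuous_on UNIV (f::'a::metric_space \<Rightarrow> 'b::metric_space) \<Longrightarrow> closed {x. f x \<in> S}"
  using continuous_closed_vimage[of S f] by (simp add: vimage_def continuous_on_eq_continuous_at)

lemma seg_meas:
  fixes S :: "(real^'n::finite) set"
  assumes "closed S"
  shows "(\<lambda>(t::real, y::real^'n::finite). (indicator {1/2..1} t * indicator (cball a r) y * indicator S (a + t *\<^sub>R (y - a)) :: ennreal)) \<in> borel_measurable (lborel \<Otimes>\<^sub>M lborel)"
proof -
  define C where "C = {p::real \<times> (real^'n). fst p \<in> {1/2..1} \<and> snd p \<in> cball a r \<and> a + fst p *\<^sub>R (snd p - a) \<in> S}"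
  have "closed C" unfolding C_def
    by (intro closed_Collect_conj closed_pre continuous_intros assms) auto
  then have "C \<in> sets lborel" by (simp add: borel_closed)
  then have "indicator C \<in> borel_measurable (lborel :: (real \<times> (real^'n)) measure)" by (rule borel_measurable_indicator)
  moreover have "(\<lambda>(t::real, y::real^'n). (indicator {1/2..1} t * indicator (cball a r) y * indicator S (a + t *\<^sub>R (y - a)) :: ennreal)) = indicator C"
    unfolding C_def by (auto simp: indicator_def fun_eq_iff)
  ultimately show ?thesis by (simp add: lborel_prod)
qed

lemma sublevel:
  fixes P :: "real^'n::finite \<Rightarrow> complex"
  assumes lp: "lp N P" and cont: "continuous_on UNIV P" and R: "R > 0" and xs: "norm xs \<le> R"
    and Ma: "cmod (P xs) = M" and Mp: "M > 0" and r0: "0 < \<rho>" and r1: "\<rho> < 1"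
  shows "measure lborel {x \<in> cball 0 R. cmod (P x) \<le> \<rho>^(N+1) / ((real N + 1) * exp (real N + 1) * 2^N) * M}
          \<le> 2 * \<rho> * measure lborel (cball xs (4*R))"
proof -
  define \<epsilon> where "\<epsilon> = \<rho>^(N+1) / ((real N + 1) * exp (real N + 1) * 2^N)"
  define S where "S = {x \<in> cball 0 R. cmod (P x) \<le> \<epsilon> * M}"
  have contn: "continuous_on UNIV (\<lambda>x. cmod (P x))" using cont by (intro continuous_intros)
  have clS: "closed S"
  proof -
    have "S = cball 0 R \<inter> {x. cmod (P x) \<le> \<epsilon> * M}" unfolding S_def by auto
    also have "closed \<dots>" by (intro closed_Int closed_cball closed_Collect_le[OF contn continuous_on_const])
    finally show ?thesis .
  qed
  have Sb: "S \<in> sets lborel" using clS by (simp add: borel_closed)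
  have Ssub: "S \<subseteq> cball 0 R" unfolding S_def by auto
  define B where "B = cball xs (4*R)"
  have Bb: "B \<in> sets lborel" unfolding B_def by (simp add: borel_closed)
  define g where "g t y = (indicator {1/2..1} t * indicator B y * indicator S (xs + t *\<^sub>R (y - xs)) :: ennreal)"
    for t :: real and y :: "real^'n"
  have meas: "case_prod g \<in> borel_measurable (lborel \<Otimes>\<^sub>M lborel)"
    unfolding g_def B_def using seg_meas[OF clS, of xs "4*R"] by simp
  have fub: "(\<integral>\<^sup>+y. (\<integral>\<^sup>+t. g t y \<partial>lborel) \<partial>lborel) = (\<integral>\<^sup>+t. (\<integral>\<^sup>+y. g t y \<partial>lborel) \<partial>lborel)"
    by (rule lborel_pair.Fubini'[OF meas])
  have up: "(\<integral>\<^sup>+t. g t y \<partial>lborel) \<le> ennreal \<rho> * indicator B y" for y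
  proof -
    define Ty where "Ty = {t\<in>{0..1}. cmod (P (xs + t *\<^sub>R (y - xs))) \<le> \<epsilon> * M}"
    have clTy: "closed Ty"
    proof -
      have c2: "continuous_on UNIV (\<lambda>t::real. cmod (P (xs + t *\<^sub>R (y - xs))))"
        by (intro continuous_intros continuous_on_compose2[OF cont]) auto
      have "Ty = {0..1} \<inter> {t. cmod (P (xs + t *\<^sub>R (y - xs))) \<le> \<epsilon> * M}" unfolding Ty_def by auto
      also have "closed \<dots>" by (intro closed_Int closed_real_atLeastAtMost closed_Collect_le[OF c2 continuous_on_const])
      finally show ?thesis .
    qed
    have Tyb: "Ty \<in> sets lborel" using clTy by (simp add: borel_closed)
    have bTy: "bounded Ty" unfolding Ty_def by (rule bounded_subset[of "{0..1}"]) auto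
    have mTy: "measure lborel Ty \<le> \<rho>"
      unfolding Ty_def \<epsilon>_def by (rule line_sublevel[OF lp Ma Mp r0 r1])
    have eTy: "emeasure lborel Ty = ennreal (measure lborel Ty)"
      using emeasure_bounded_finite[OF bTy] by (simp add: emeasure_eq_ennreal_measure)
    have "(\<integral>\<^sup>+t. g t y \<partial>lborel) \<le> (\<integral>\<^sup>+t. indicator B y * indicator Ty t \<partial>lborel)"
    proof (rule nn_integral_mono)
      fix t :: real
      show "g t y \<le> indicator B y * indicator Ty t"
        unfolding g_def S_def Ty_def by (auto simp: indicator_def)
    qed
    also have "\<dots> = indicator B y * emeasure lborel Ty" by (rule nn_integral_cmult_indicator[OF Tyb])
    also have "\<dots> \<le> indicator B y * ennreal \<rho>" unfolding eTy using mTy by (intro mult_left_mono ennreal_leI) auto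
    finally show ?thesis by (simp add: mult.commute)
  qed
  have low: "indicator {1/2..1} t * emeasure lborel S \<le> (\<integral>\<^sup>+y. g t y \<partial>lborel)" for t :: real
  proof (cases "t \<in> {1/2..1}")
    case False then show ?thesis by simp
  next
    case True
    then have t0: "t > 0" and t1: "t \<le> 1" and th: "t \<ge> 1/2" by auto
    define A where "A = {y. xs + t *\<^sub>R (y - xs) \<in> S}"
    have clA: "closed A" unfolding A_def by (intro closed_pre clS continuous_intros)
    have Ab: "A \<in> sets lborel" using clA by (simp add: borel_closed)
    have AB: "A \<subseteq> B"
    proof
      fix y assume "y \<in> A"
      then have s: "xs + t *\<^sub>R (y - xs) \<in> cball 0 R" using Ssub unfolding A_def by auto
      have "t * norm (y - xs) = norm ((xs + t *\<^sub>R (y - xs)) - xs)" using t0 by simp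
      also have "\<dots> \<le> norm (xs + t *\<^sub>R (y - xs)) + norm xs" by (rule norm_triangle_ineq4)
      also have "\<dots> \<le> 2 * R" using s xs by simp
      finally have "t * norm (y - xs) \<le> 2 * R" .
      moreover have "(1/2) * norm (y - xs) \<le> t * norm (y - xs)" using th by (intro mult_right_mono) auto
      ultimately have "norm (y - xs) \<le> 4 * R" by simp
      then show "y \<in> B" unfolding B_def by (simp add: dist_norm norm_minus_commute)
    qed
    have gA: "g t y = indicator A y" for y
      unfolding g_def using True AB unfolding A_def by (auto simp: indicator_def)
    have img: "(\<lambda>x. t *\<^sub>R x + (1 - t) *\<^sub>R xs) ` A = S"
    proof
      show "(\<lambda>x. t *\<^sub>R x + (1 - t) *\<^sub>R xs) ` A \<subseteq> S"
        unfolding A_def by (auto simp: algebra_simps)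
    next
      show "S \<subseteq> (\<lambda>x. t *\<^sub>R x + (1 - t) *\<^sub>R xs) ` A"
      proof
        fix s assume sS: "s \<in> S"
        define y where "y = xs + (1/t) *\<^sub>R (s - xs)"
        have e: "xs + t *\<^sub>R (y - xs) = s" unfolding y_def using t0 by simp
        have "t *\<^sub>R y + (1 - t) *\<^sub>R xs = s" using e by (simp add: algebra_simps)
        moreover have "y \<in> A" unfolding A_def using e sS by simp
        ultimately show "s \<in> (\<lambda>x. t *\<^sub>R x + (1 - t) *\<^sub>R xs) ` A" by (metis image_eqI)
      qed
    qed
    have "emeasure lborel S = emeasure lebesgue S" using Sb by simp
    also have "\<dots> = ennreal (\<bar>t\<bar> ^ DIM(real^'n)) * emeasure lebesgue A"
      using emeasure_lebesgue_affine[of t "(1 - t) *\<^sub>R xs" A] img by simp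
    also have "\<dots> \<le> 1 * emeasure lebesgue A"
      using t0 t1 by (intro mult_right_mono) (auto simp: power_le_one)
    also have "\<dots> = emeasure lborel A" using Ab by simp
    also have "\<dots> = (\<integral>\<^sup>+y. g t y \<partial>lborel)" unfolding gA using Ab by simp
    finally show ?thesis using True by simp
  qed
  have "(\<integral>\<^sup>+t. indicator {1/2..1::real} t * emeasure lborel S \<partial>lborel) \<le> (\<integral>\<^sup>+t. (\<integral>\<^sup>+y. g t y \<partial>lborel) \<partial>lborel)"
    by (rule nn_integral_mono) (rule low)
  also have "\<dots> = (\<integral>\<^sup>+y. (\<integral>\<^sup>+t. g t y \<partial>lborel) \<partial>lborel)" using fub by simp
  also have "\<dots> \<le> (\<integral>\<^sup>+y. ennreal \<rho> * indicator B y \<partial>lborel)" by (rule nn_integral_mono) (rule up)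
  also have "\<dots> = ennreal \<rho> * emeasure lborel B" by (rule nn_integral_cmult_indicator[OF Bb])
  finally have ineq: "(\<integral>\<^sup>+t. indicator {1/2..1::real} t * emeasure lborel S \<partial>lborel) \<le> ennreal \<rho> * emeasure lborel B" .
  have "(\<integral>\<^sup>+t. indicator {1/2..1::real} t * emeasure lborel S \<partial>lborel) = (\<integral>\<^sup>+t. emeasure lborel S * indicator {1/2..1::real} t \<partial>lborel)"
    by (simp add: mult.commute)
  also have "\<dots> = emeasure lborel S * emeasure lborel {1/2..1::real}" by (rule nn_integral_cmult_indicator) simp
  finally have X: "emeasure lborel S * emeasure lborel {1/2..1::real} \<le> ennreal \<rho> * emeasure lborel B" using ineq by simp
  have half: "emeasure lborel {1/2..1::real} = ennreal (1/2)" using emeasure_lborel_Icc[of "1/2" "1::real"] by simp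
  have eS: "emeasure lborel S = ennreal (measure lborel S)"
  proof -
    have "bounded S" using Ssub bounded_cball bounded_subset by blast
    then show ?thesis using emeasure_bounded_finite[of S] by (simp add: emeasure_eq_ennreal_measure)
  qed
  have eB: "emeasure lborel B = ennreal (measure lborel B)"
    using emeasure_bounded_finite[of B] unfolding B_def by (simp add: emeasure_eq_ennreal_measure)
  have "ennreal (measure lborel S) * ennreal (1/2) \<le> ennreal \<rho> * ennreal (measure lborel B)"
    using X unfolding eS eB half .
  then have "ennreal (measure lborel S * (1/2)) \<le> ennreal (\<rho> * measure lborel B)"
    using r0 by (simp only: ennreal_mult[symmetric] measure_nonneg less_imp_le)
  then have "measure lborel S * (1/2) \<le> \<rho> * measure lborel B"
    using r0 by (subst (asm) ennreal_le_iff) auto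
  then show ?thesis unfolding S_def \<epsilon>_def B_def by simp
qed


lemma gauss_integrable: "integrable lebesgue (\<lambda>x::'a::euclidean_space. exp (- (norm x)\<^sup>2 / 2))"
proof -
  have i1: "integrable lborel (\<lambda>t::real. sqrt (2 * pi) * std_normal_density t)"
    by (intro integrable_mult_right integrable_normal_density) simp
  have "(\<lambda>t::real. sqrt (2 * pi) * std_normal_density t) = (\<lambda>t. exp (- t\<^sup>2 / 2))"
    by (simp add: std_normal_density_def fun_eq_iff)
  with i1 have i2: "integrable lborel (\<lambda>t::real. exp (- t\<^sup>2 / 2))" by simp
  have f1: "(\<integral>\<^sup>+t. ennreal (exp (- t\<^sup>2 / 2)) \<partial>lborel) < \<infinity>"
    using integrableD(2)[OF i2] by (simp add: less_top)
  have eq: "ennreal (exp (- (norm x)\<^sup>2 / 2)) = (\<Prod>b\<in>Basis. ennreal (exp (- (x \<bullet> b)\<^sup>2 / 2)))" for x :: 'a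
  proof -
    have "(norm x)\<^sup>2 = (\<Sum>b\<in>Basis. (x \<bullet> b)\<^sup>2)"
      by (simp only: power2_norm_eq_inner euclidean_inner[of x x]) (simp add: power2_eq_square)
    then have "exp (- (norm x)\<^sup>2 / 2) = (\<Prod>b\<in>Basis. exp (- (x \<bullet> b)\<^sup>2 / 2))"
      by (simp add: exp_sum[symmetric] sum_negf sum_divide_distrib)
    then show ?thesis by (simp add: prod_ennreal)
  qed
  have "(\<integral>\<^sup>+x. ennreal (exp (- (norm x)\<^sup>2 / 2)) \<partial>(lborel::'a measure)) =
      (\<integral>\<^sup>+x. (\<Prod>b\<in>Basis. ennreal (exp (- (x \<bullet> b)\<^sup>2 / 2))) \<partial>(lborel::'a measure))"
    by (simp only: eq)
  also have "\<dots> = (\<Prod>b\<in>(Basis::'a set). (\<integral>\<^sup>+t. ennreal (exp (- t\<^sup>2 / 2)) \<partial>lborel))"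
    by (rule nn_integral_lborel_prod[where f="\<lambda>b t. ennreal (exp (- t\<^sup>2 / 2))"]) auto
  also have "\<dots> < \<infinity>" using f1 by (simp add: power_less_top_ennreal)
  finally have fin: "(\<integral>\<^sup>+x. ennreal (exp (- (norm x)\<^sup>2 / 2)) \<partial>(lborel::'a measure)) < \<infinity>" .
  have "integrable lborel (\<lambda>x::'a. exp (- (norm x)\<^sup>2 / 2))"
    by (rule integrableI_nonneg) (use fin in auto)
  then show ?thesis by (subst integrable_completion) auto
qed


lemma exp_poly_bound:
  fixes r R :: real
  assumes R: "R > 0" and NR: "real N \<le> R\<^sup>2" and r: "r \<ge> 0"
  shows "((r + R) / R) ^ (2*N) * exp (- r\<^sup>2) \<le> exp (2 * real N) * exp (- r\<^sup>2 / 2)"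
proof -
  have a1: "(r + R) / R = 1 + r / R" using R by (simp add: field_simps)
  have "(r + R) / R \<le> exp (r / R)" unfolding a1 by (rule exp_ge_add_one_self)
  then have "((r + R) / R) ^ (2*N) \<le> exp (r / R) ^ (2*N)"
    using R r by (intro power_mono) auto
  also have "\<dots> = exp (real (2*N) * (r / R))" by (rule exp_of_nat_mult[symmetric])
  also have "real (2*N) * (r / R) = 2 * real N * r / R" by simp
  finally have p: "((r + R) / R) ^ (2*N) \<le> exp (2 * real N * r / R)" .
  define q where "q = real N / R"
  have q2: "q\<^sup>2 \<le> real N"
  proof -
    have "q\<^sup>2 = real N * (real N / R\<^sup>2)" unfolding q_def by (simp add: power2_eq_square)
    also have "\<dots> \<le> real N * 1" using NR R by (intro mult_left_mono) (auto simp: field_simps)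
    finally show ?thesis by simp
  qed
  have amgm: "2 * q * r \<le> 2 * q\<^sup>2 + r\<^sup>2 / 2"
  proof -
    have "0 \<le> (2 * q - r)\<^sup>2 / 2" by simp
    then show ?thesis by (simp add: power2_eq_square algebra_simps)
  qed
  have "2 * real N * r / R = 2 * q * r" unfolding q_def by simp
  then have lin: "2 * real N * r / R - r\<^sup>2 \<le> 2 * real N - r\<^sup>2 / 2" using amgm q2 by linarith
  have "((r + R) / R) ^ (2*N) * exp (- r\<^sup>2) \<le> exp (2 * real N * r / R) * exp (- r\<^sup>2)"
    using p by (intro mult_right_mono) auto
  also have "\<dots> = exp (2 * real N * r / R - r\<^sup>2)" by (simp add: exp_diff exp_minus field_simps)
  also have "\<dots> \<le> exp (2 * real N - r\<^sup>2 / 2)" using lin by simp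
  also have "\<dots> = exp (2 * real N) * exp (- r\<^sup>2 / 2)" by (simp add: exp_add[symmetric])
  finally show ?thesis .
qed

lemma upper_pt:
  fixes Px M R :: real
  assumes R: "R > 0" and NR: "real N \<le> R\<^sup>2" and M: "M \<ge> 0" and r: "r \<ge> 0" and P0: "0 \<le> Px"
    and bnd: "Px \<le> M * (real N + 1) * exp (real N + 1) * ((r + R) / R) ^ N"
  shows "Px\<^sup>2 * exp (- r\<^sup>2) \<le> M\<^sup>2 * ((real N + 1)\<^sup>2 * exp (2 * real N + 2) * exp (2 * real N)) * exp (- r\<^sup>2 / 2)"
proof -
  have "Px\<^sup>2 \<le> (M * (real N + 1) * exp (real N + 1) * ((r + R) / R) ^ N)\<^sup>2"
    using bnd P0 by (intro power_mono) auto
  also have "\<dots> = M\<^sup>2 * (real N + 1)\<^sup>2 * (exp (real N + 1))\<^sup>2 * (((r + R) / R) ^ N)\<^sup>2"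
    by (simp only: power_mult_distrib)
  also have "(exp (real N + 1))\<^sup>2 = exp (2 * real N + 2)" by (simp add: power2_eq_square exp_add[symmetric])
  also have "(((r + R) / R) ^ N)\<^sup>2 = ((r + R) / R) ^ (2*N)" by (metis power_mult mult.commute)
  finally have s: "Px\<^sup>2 \<le> M\<^sup>2 * (real N + 1)\<^sup>2 * exp (2 * real N + 2) * ((r + R) / R) ^ (2*N)" .
  have "Px\<^sup>2 * exp (- r\<^sup>2) \<le> M\<^sup>2 * (real N + 1)\<^sup>2 * exp (2 * real N + 2) * ((r + R) / R) ^ (2*N) * exp (- r\<^sup>2)"
    using s by (intro mult_right_mono) auto
  also have "\<dots> = M\<^sup>2 * (real N + 1)\<^sup>2 * exp (2 * real N + 2) * (((r + R) / R) ^ (2*N) * exp (- r\<^sup>2))"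
    by (simp add: mult.assoc)
  also have "\<dots> \<le> M\<^sup>2 * (real N + 1)\<^sup>2 * exp (2 * real N + 2) * (exp (2 * real N) * exp (- r\<^sup>2 / 2))"
    using exp_poly_bound[OF R NR r] by (intro mult_left_mono) auto
  finally show ?thesis by (simp add: mult.assoc)
qed


lemma core:
  fixes \<omega> :: "(real ^ 'n::finite) set" and P :: "real^'n \<Rightarrow> complex"
  assumes \<omega>m: "\<omega> \<in> sets lebesgue"
    and g0: "0 < \<gamma>" and g1: "\<gamma> \<le> 1/2" and R1: "R1 \<ge> 1"
    and dens: "\<forall>R\<ge>R1. \<gamma> * measure lebesgue (ball (0::real^'n) R) \<le> measure lebesgue (\<omega> \<inter> ball 0 R)"
    and hp: "hpol N P"
  defines "f \<equiv> (\<lambda>x. P x * complex_of_real (exp (- (norm x)\<^sup>2 / 2)))"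
    and "G \<equiv> integral\<^sup>L lebesgue (\<lambda>x::real^'n. exp (- (norm x)\<^sup>2 / 2))"
    and "V1 \<equiv> unit_ball_vol (DIM(real^'n)) * R1 ^ DIM(real^'n)"
  shows "(LINT x:UNIV|lebesgue. (cmod (f x))\<^sup>2) \<le>
     ((real N + 1)\<^sup>2 * exp (2 * real N + 2) * exp (2 * real N) * G * 2 * exp (R1\<^sup>2 + real N) /
       (((\<gamma> / (4 * 4 ^ DIM(real^'n)))^(N+1) / ((real N + 1) * exp (real N + 1) * 2^N))\<^sup>2 * \<gamma> * V1))
       * (LINT x:\<omega>|lebesgue. (cmod (f x))\<^sup>2)"
proof -
  define \<rho> where "\<rho> = \<gamma> / (4 * 4 ^ DIM(real^'n))"
  define \<epsilon> where "\<epsilon> = \<rho>^(N+1) / ((real N + 1) * exp (real N + 1) * 2^N)"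
  have lp: "lp N P" and cont: "continuous_on UNIV P" using hp unfolding hpol_def by auto
  define R where "R = sqrt (R1\<^sup>2 + real N)"
  have RR: "R\<^sup>2 = R1\<^sup>2 + real N" unfolding R_def by simp
  have RR1: "R1 \<le> R" unfolding R_def using R1 by (intro real_le_rsqrt) auto
  have Rp: "R > 0" using RR1 R1 by simp
  have NR: "real N \<le> R\<^sup>2" using RR by simp
  define F2 where "F2 x = (cmod (f x))\<^sup>2" for x
  have F2eq: "F2 x = (cmod (P x))\<^sup>2 * exp (- (norm x)\<^sup>2)" for x
  proof -
    have "F2 x = (cmod (P x) * exp (- (norm x)\<^sup>2 / 2))\<^sup>2" unfolding F2_def f_def by (simp add: norm_mult)
    also have "\<dots> = (cmod (P x))\<^sup>2 * (exp (- (norm x)\<^sup>2 / 2))\<^sup>2" by (simp add: power_mult_distrib)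
    also have "(exp (- (norm x)\<^sup>2 / 2))\<^sup>2 = exp (- (norm x)\<^sup>2)" by (simp add: power2_eq_square exp_add[symmetric])
    finally show ?thesis .
  qed
  have F2cont: "continuous_on UNIV F2" unfolding F2_def f_def using cont by (intro continuous_intros) auto
  have F2meas: "F2 \<in> borel_measurable lebesgue"
  proof -
    have "F2 \<in> borel_measurable lborel" using borel_measurable_continuous_onI[OF F2cont] by simp
    then show ?thesis by (rule measurable_completion)
  qed
  have F2nn: "0 \<le> F2 x" for x unfolding F2_def by simp
  have cP: "continuous_on (cball 0 R) (\<lambda>x. cmod (P x))"
    using cont by (intro continuous_intros) (auto intro: continuous_on_subset)
  obtain xs where xs: "xs \<in> cball 0 R" and xsmax: "\<forall>y\<in>cball 0 R. cmod (P y) \<le> cmod (P xs)"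
    using continuous_attains_sup[OF compact_cball _ cP] Rp by auto
  define M where "M = cmod (P xs)"
  have M0: "M \<ge> 0" unfolding M_def by simp
  have bndM: "\<forall>y\<in>cball 0 R. cmod (P y) \<le> M" using xsmax unfolding M_def by blast
  define K1 where "K1 = (real N + 1)\<^sup>2 * exp (2 * real N + 2) * exp (2 * real N)"
  have K1p: "K1 > 0" unfolding K1_def by simp
  have ptup: "F2 x \<le> M\<^sup>2 * K1 * exp (- (norm x)\<^sup>2 / 2)" for x
  proof -
    have e: "cmod (P x) \<le> M * (real N + 1) * exp (real N + 1) * ((norm x + R) / R) ^ N"
      by (rule extrap[OF lp Rp bndM])
    show ?thesis unfolding F2eq K1_def
      by (rule upper_pt[OF Rp NR M0 norm_ge_zero norm_ge_zero e])
  qed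
  have gint: "integrable lebesgue (\<lambda>x::real^'n. exp (- (norm x)\<^sup>2 / 2))" by (rule gauss_integrable)
  have Gnn: "G \<ge> 0" unfolding G_def by (intro Bochner_Integration.integral_nonneg) auto
  have bint: "integrable lebesgue (\<lambda>x::real^'n. M\<^sup>2 * K1 * exp (- (norm x)\<^sup>2 / 2))"
    using gint by (intro integrable_mult_right)
  have F2int: "integrable lebesgue F2"
    by (rule Bochner_Integration.integrable_bound[OF bint F2meas]) (use ptup F2nn M0 K1p in \<open>auto intro!: AE_I2\<close>)
  have Ieq: "(LINT x:UNIV|lebesgue. (cmod (f x))\<^sup>2) = integral\<^sup>L lebesgue F2"
    unfolding set_lebesgue_integral_def F2_def by simp
  have Jeq: "(LINT x:\<omega>|lebesgue. (cmod (f x))\<^sup>2) = integral\<^sup>L lebesgue (\<lambda>x. indicator \<omega> x * F2 x)"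
    unfolding set_lebesgue_integral_def F2_def by simp
  have Jnn: "0 \<le> integral\<^sup>L lebesgue (\<lambda>x. indicator \<omega> x * F2 x)"
    by (intro Bochner_Integration.integral_nonneg) (auto simp: F2nn)
  have Iup: "integral\<^sup>L lebesgue F2 \<le> M\<^sup>2 * K1 * G"
  proof -
    have "integral\<^sup>L lebesgue F2 \<le> integral\<^sup>L lebesgue (\<lambda>x::real^'n. M\<^sup>2 * K1 * exp (- (norm x)\<^sup>2 / 2))"
      by (rule Bochner_Integration.integral_mono[OF F2int bint]) (rule ptup)
    also have "\<dots> = M\<^sup>2 * K1 * G" unfolding G_def by simp
    finally show ?thesis .
  qed
  define \<Phi> where "\<Phi> = (real N + 1)\<^sup>2 * exp (2 * real N + 2) * exp (2 * real N) * G * 2 * exp (R1\<^sup>2 + real N) / (\<epsilon>\<^sup>2 * \<gamma> * V1)"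
  have V1p: "V1 > 0" unfolding V1_def using R1 by simp
  have p4: "(1::real) \<le> 4 ^ CARD('n)" by (rule one_le_power) simp
  have "\<gamma> < 4 * 4 ^ CARD('n)" using g1 p4 by linarith
  note lt = this
  have den: "(0::real) < 4 * 4 ^ CARD('n)" by simp
  have \<rho>c: "\<rho> = \<gamma> / (4 * 4 ^ CARD('n))" unfolding \<rho>_def by simp
  have \<rho>p: "\<rho> > 0" unfolding \<rho>c using g0 den by (rule divide_pos_pos)
  have \<rho>1: "\<rho> < 1" unfolding \<rho>c by (subst divide_less_eq_1_pos[OF den]) (rule lt)
  have \<epsilon>p: "\<epsilon> > 0" unfolding \<epsilon>_def using \<rho>p by simp
  have \<Phi>nn: "\<Phi> \<ge> 0" unfolding \<Phi>_def using Gnn \<epsilon>p g0 V1p by simp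
  show ?thesis
  proof (cases "M = 0")
    case True
    have "F2 x = 0" for x
    proof -
      have "F2 x \<le> M\<^sup>2 * K1 * exp (- (norm x)\<^sup>2 / 2)" by (rule ptup)
      then show ?thesis using True F2nn[of x] by simp
    qed
    then have "F2 = (\<lambda>x. 0)" by auto
    then have "integral\<^sup>L lebesgue F2 = 0" by simp
    then show ?thesis unfolding Ieq Jeq \<rho>_def[symmetric] \<epsilon>_def[symmetric] \<Phi>_def[symmetric] using \<Phi>nn Jnn by simp
  next
    case False
    then have Mp: "M > 0" using M0 by simp
    define S where "S = {x \<in> cball 0 R. cmod (P x) \<le> \<epsilon> * M}"
    have xsn: "norm xs \<le> R" using xs by simp
    have Ssmall: "measure lborel S \<le> 2 * \<rho> * measure lborel (cball xs (4*R))"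
      unfolding S_def \<epsilon>_def by (rule sublevel[OF lp cont Rp xsn M_def[symmetric] Mp \<rho>p \<rho>1])
    define VR where "VR = unit_ball_vol (DIM(real^'n)) * R ^ DIM(real^'n)"
    have ballR: "measure lebesgue (ball (0::real^'n) R) = VR"
    proof -
      have "measure lebesgue (ball (0::real^'n) R) = measure lborel (ball (0::real^'n) R)" by simp
      also have "\<dots> = VR" unfolding VR_def using Rp by (simp add: content_ball)
      finally show ?thesis .
    qed
    have cb4: "measure lborel (cball xs (4*R)) = 4 ^ DIM(real^'n) * VR"
      unfolding VR_def using Rp by (simp add: content_cball power_mult_distrib)
    have Sle: "measure lborel S \<le> \<gamma> / 2 * VR"
    proof -
      have "2 * \<rho> * (4 ^ DIM(real^'n) * VR) = \<gamma> / 2 * VR" unfolding \<rho>_def by (simp add: field_simps)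
      moreover have "measure lborel S \<le> 2 * \<rho> * (4 ^ DIM(real^'n) * VR)" using Ssmall unfolding cb4 .
      ultimately show ?thesis by linarith
    qed
    have VRV1: "V1 \<le> VR" unfolding V1_def VR_def using R1 RR1
      by (intro mult_left_mono power_mono) auto
    define E where "E = \<omega> \<inter> ball 0 R"
    have mE: "\<gamma> * VR \<le> measure lebesgue E" using dens RR1 ballR unfolding E_def by auto
    define G2 where "G2 = E - S"
    have clS: "closed S"
    proof -
      have c: "continuous_on UNIV (\<lambda>x. cmod (P x))" using cont by (intro continuous_intros)
      have "S = cball 0 R \<inter> {x. cmod (P x) \<le> \<epsilon> * M}" unfolding S_def by auto
      also have "closed \<dots>" by (intro closed_Int closed_cball closed_Collect_le[OF c continuous_on_const])
      finally show ?thesis .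
    qed
    have Sb: "S \<in> sets lborel" using clS by (simp add: borel_closed)
    have SL: "S \<in> sets lebesgue" using Sb by simp
    have bL: "ball (0::real^'n) R \<in> sets lebesgue"
      by (rule sets_completionI_sets) (simp add: borel_open)
    have EL: "E \<in> sets lebesgue" unfolding E_def using \<omega>m bL by (rule sets.Int)
    have G2L: "G2 \<in> sets lebesgue" unfolding G2_def using EL SL by simp
    have mS: "measure lebesgue S = measure lborel S" using Sb by simp
    have Esub: "E \<subseteq> G2 \<union> S" unfolding G2_def by auto
    have bU: "bounded (G2 \<union> S)" unfolding G2_def E_def S_def by (rule bounded_subset[OF bounded_cball[of 0 R]]) auto
    have Ufm: "G2 \<union> S \<in> lmeasurable" by (rule bounded_set_imp_lmeasurable[OF bU]) (use G2L SL in simp)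
    have "measure lebesgue E \<le> measure lebesgue (G2 \<union> S)"
      by (rule measure_mono_fmeasurable[OF Esub EL Ufm])
    also have "\<dots> \<le> measure lebesgue G2 + measure lebesgue S" by (rule measure_Un_le[OF G2L SL])
    finally have mU: "measure lebesgue E \<le> measure lebesgue G2 + measure lebesgue S" .
    have "\<gamma> / 2 * V1 \<le> \<gamma> / 2 * VR" using VRV1 g0 by (intro mult_left_mono) auto
    then have mG2: "\<gamma> / 2 * V1 \<le> measure lebesgue G2" using mU mE Sle mS by linarith
    have G2fin: "emeasure lebesgue G2 < \<infinity>"
    proof -
      have "bounded G2" using bU bounded_subset by blast
      then have "G2 \<in> lmeasurable" using G2L by (rule bounded_set_imp_lmeasurable)
      then show ?thesis unfolding fmeasurable_def by blast
    qed
    define c0 where "c0 = (\<epsilon> * M)\<^sup>2 * exp (- R\<^sup>2)"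
    have ptlow: "c0 \<le> F2 x" if xG: "x \<in> G2" for x
    proof -
      have xb: "norm x < R" and xnS: "x \<notin> S" using xG unfolding G2_def E_def by auto
      then have gt: "\<epsilon> * M < cmod (P x)" unfolding S_def using xb by auto
      have "(\<epsilon> * M)\<^sup>2 \<le> (cmod (P x))\<^sup>2" using gt \<epsilon>p Mp by (intro power_mono) auto
      moreover have "exp (- R\<^sup>2) \<le> exp (- (norm x)\<^sup>2)"
        using xb by (simp add: power_strict_mono less_imp_le)
      ultimately show ?thesis unfolding c0_def F2eq by (intro mult_mono) auto
    qed
    have i1: "integrable lebesgue (\<lambda>x::real^'n. indicator G2 x * c0)"
      using integrable_real_indicator[OF G2L G2fin] by (rule integrable_mult_left)
    have i2: "integrable lebesgue (\<lambda>x. indicator \<omega> x * F2 x)"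
      using integrable_mult_indicator[OF \<omega>m F2int] by simp
    have "integral\<^sup>L lebesgue (\<lambda>x::real^'n. indicator G2 x * c0) \<le> integral\<^sup>L lebesgue (\<lambda>x. indicator \<omega> x * F2 x)"
    proof (rule Bochner_Integration.integral_mono[OF i1 i2])
      fix x :: "real^'n"
      show "indicator G2 x * c0 \<le> indicator \<omega> x * F2 x"
      proof (cases "x \<in> G2")
        case True
        then have "x \<in> \<omega>" unfolding G2_def E_def by auto
        then show ?thesis using True ptlow[OF True] by simp
      next
        case False then show ?thesis using F2nn[of x] by (simp add: indicator_def)
      qed
    qed
    moreover have "integral\<^sup>L lebesgue (\<lambda>x::real^'n. indicator G2 x * c0) = measure lebesgue G2 * c0"
      using has_bochner_integral_integral_eq[OF has_bochner_integral_real_indicator[OF G2L G2fin]] by simp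
    ultimately have Jlow: "measure lebesgue G2 * c0 \<le> integral\<^sup>L lebesgue (\<lambda>x. indicator \<omega> x * F2 x)" by simp
    define D where "D = \<epsilon>\<^sup>2 * \<gamma> * V1 / 2 * exp (- R\<^sup>2)"
    have Dp: "D > 0" unfolding D_def using \<epsilon>p g0 V1p by simp
    have c0nn: "c0 \<ge> 0" unfolding c0_def by simp
    have "M\<^sup>2 * D = (\<gamma> / 2 * V1) * c0" unfolding D_def c0_def by (simp add: power_mult_distrib)
    also have "\<dots> \<le> measure lebesgue G2 * c0" using mG2 c0nn by (rule mult_right_mono)
    finally have JD: "M\<^sup>2 * D \<le> integral\<^sup>L lebesgue (\<lambda>x. indicator \<omega> x * F2 x)" using Jlow by simp
    have ee: "exp (real N + R1\<^sup>2) * exp (- real N - R1\<^sup>2) = 1" by (simp add: exp_add[symmetric])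
    have \<Phi>eq: "\<Phi> = K1 * G / D"
      unfolding \<Phi>_def K1_def D_def using Dp \<epsilon>p g0 V1p ee by (simp add: exp_minus RR field_simps)
    have "integral\<^sup>L lebesgue F2 \<le> M\<^sup>2 * K1 * G" by (rule Iup)
    also have "\<dots> = (M\<^sup>2 * D) * (K1 * G / D)" using Dp by simp
    also have "\<dots> \<le> integral\<^sup>L lebesgue (\<lambda>x. indicator \<omega> x * F2 x) * (K1 * G / D)"
      using JD K1p Gnn Dp by (intro mult_right_mono) auto
    finally have "integral\<^sup>L lebesgue F2 \<le> \<Phi> * integral\<^sup>L lebesgue (\<lambda>x. indicator \<omega> x * F2 x)"
      unfolding \<Phi>eq by (simp add: mult.commute)
    then show ?thesis unfolding Ieq Jeq \<rho>_def[symmetric] \<epsilon>_def[symmetric] \<Phi>_def[symmetric] .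
  qed
qed


lemma Phi_bound:
  fixes \<rho> G \<gamma> V1 R1 :: real
  assumes r: "\<rho> > 0" and G: "G \<ge> 0" and g: "\<gamma> > 0" and V: "V1 > 0"
  shows "(real N + 1)\<^sup>2 * exp (2 * real N + 2) * exp (2 * real N) * G * 2 * exp (R1\<^sup>2 + real N) /
       ((\<rho>^(N+1) / ((real N + 1) * exp (real N + 1) * 2^N))\<^sup>2 * \<gamma> * V1)
     \<le> (2 * G * exp (R1\<^sup>2) * exp 4 / (\<rho>\<^sup>2 * \<gamma> * V1)) * (exp 11 * 4 / \<rho>\<^sup>2) ^ N"
proof -
  define a where "a = real N + 1"
  define x where "x = exp (real N)"
  have a0: "a > 0" unfolding a_def by simp
  have x0: "x > 0" unfolding x_def by simp
  have e1: "exp (2 * real N + 2) = x\<^sup>2 * exp 2" unfolding x_def by (simp add: exp_add[symmetric] power2_eq_square)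
  have e2: "exp (2 * real N) = x\<^sup>2" unfolding x_def by (simp add: exp_add[symmetric] power2_eq_square)
  have e3: "exp (R1\<^sup>2 + real N) = exp (R1\<^sup>2) * x" unfolding x_def by (simp add: exp_add)
  have e4: "exp (real N + 1) = x * exp 1" unfolding x_def by (simp add: exp_add)
  have e5: "exp (2::real) = exp 1 ^ 2" by (simp add: power2_eq_square exp_add[symmetric])
  have e6: "exp (4::real) = exp 1 ^ 4"
    by (metis exp_of_nat_mult mult.right_neutral of_nat_numeral)
  have p24': "(2::real)^(2*N) = 4^N" by (simp add: power_mult)
  have p24: "(2::real)^(N*2) = 4^N" using p24' by (simp add: mult.commute)
  have q1: "(\<rho>^N)\<^sup>2 = \<rho>^(N*2)" by (simp add: power_mult)
  have q2: "((2::real)^N)\<^sup>2 = 4^N" using p24 by (simp add: power_mult[symmetric])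
  have x7: "x * x ^ 6 = x ^ 7" by (simp add: power_Suc[symmetric] del: power_Suc)
  have lhs: "(real N + 1)\<^sup>2 * exp (2 * real N + 2) * exp (2 * real N) * G * 2 * exp (R1\<^sup>2 + real N) /
       ((\<rho>^(N+1) / ((real N + 1) * exp (real N + 1) * 2^N))\<^sup>2 * \<gamma> * V1)
     = a^4 * x^7 * 4^N / \<rho>^(2*N) * (2 * G * exp (R1\<^sup>2) * exp 4 / (\<rho>\<^sup>2 * \<gamma> * V1))"
    unfolding e1 e2 e3 e4 e6 unfolding a_def[symmetric] using a0 x0 r g V
    by (simp add: e5 p24 p24' q1 q2 x7 power_mult_distrib power_divide power_add field_simps)
  have ax: "a \<le> x" unfolding a_def x_def using exp_ge_add_one_self[of "real N"] by linarith
  have "a^4 \<le> x^4" using ax a0 by (intro power_mono) auto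
  then have "a^4 * x^7 * 4^N / \<rho>^(2*N) \<le> x^4 * x^7 * 4^N / \<rho>^(2*N)"
    using x0 r by (intro divide_right_mono mult_right_mono) auto
  also have "x^4 * x^7 * 4^N / \<rho>^(2*N) = (exp 11 * 4 / \<rho>\<^sup>2) ^ N"
  proof -
    have "x^4 * x^7 = x^11" by (simp add: power_add[symmetric])
    also have "x^11 = exp 11 ^ N" unfolding x_def
      by (metis exp_of_nat_mult mult.commute of_nat_numeral)
    finally show ?thesis by (simp add: power_mult_distrib power_divide power_mult)
  qed
  finally have b: "a^4 * x^7 * 4^N / \<rho>^(2*N) \<le> (exp 11 * 4 / \<rho>\<^sup>2) ^ N" .
  have K0: "0 \<le> 2 * G * exp (R1\<^sup>2) * exp 4 / (\<rho>\<^sup>2 * \<gamma> * V1)" using G r g V by simp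
  show ?thesis unfolding lhs using mult_right_mono[OF b K0] by (simp add: mult.commute)
qed


theorem mainTheorem2:
  fixes \<omega> :: "(real ^ 'n::finite) set"
  assumes "\<omega> \<in> sets lebesgue"
    and "Liminf at_top (\<lambda>R::real. ereal (measure lebesgue (\<omega> \<inter> ball 0 R)
            / measure lebesgue (ball (0 :: real ^ 'n) R))) > 0"
  shows "\<exists>C>1. \<forall>N::nat. \<forall>f\<in>hermite_space N.
           L2_norm_on UNIV f \<le> C * exp (C * real N) * L2_norm_on \<omega> f"
proof -
  note \<omega>m = assms(1)
  obtain c where c0: "0 < c" and cL: "c < Liminf at_top (\<lambda>R::real. ereal (measure lebesgue (\<omega> \<inter> ball 0 R)
            / measure lebesgue (ball (0 :: real ^ 'n) R)))"
    using dense[OF assms(2)] by blast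
  have "c \<noteq> \<infinity>" using cL by auto
  moreover have "c \<noteq> - \<infinity>" using c0 by auto
  ultimately obtain \<gamma>0 where c: "c = ereal \<gamma>0" by (cases c) auto
  have g0p: "\<gamma>0 > 0" using c0 c by simp
  have "eventually (\<lambda>R. c < ereal (measure lebesgue (\<omega> \<inter> ball 0 R) / measure lebesgue (ball (0 :: real ^ 'n) R))) at_top"
    by (rule less_LiminfD[OF cL])
  then obtain R0 where R0: "\<forall>R\<ge>R0. \<gamma>0 < measure lebesgue (\<omega> \<inter> ball 0 R) / measure lebesgue (ball (0 :: real ^ 'n) R)"
    unfolding eventually_at_top_linorder c by auto
  define \<gamma> where "\<gamma> = min \<gamma>0 (1/2)"
  define R1 where "R1 = max R0 1"
  have gp: "0 < \<gamma>" and g2: "\<gamma> \<le> 1/2" and gg: "\<gamma> \<le> \<gamma>0" unfolding \<gamma>_def using g0p by auto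
  have R1: "R1 \<ge> 1" unfolding R1_def by simp
  have dens: "\<forall>R\<ge>R1. \<gamma> * measure lebesgue (ball (0::real^'n) R) \<le> measure lebesgue (\<omega> \<inter> ball 0 R)"
  proof (intro allI impI)
    fix R assume RR: "R1 \<le> R"
    then have Rp: "R > 0" and RR0: "R \<ge> R0" unfolding R1_def by auto
    have mb: "measure lebesgue (ball (0::real^'n) R) = unit_ball_vol (DIM(real^'n)) * R ^ DIM(real^'n)"
      using Rp by (simp add: content_ball)
    have mbp: "measure lebesgue (ball (0::real^'n) R) > 0" unfolding mb using Rp by simp
    have "\<gamma>0 < measure lebesgue (\<omega> \<inter> ball 0 R) / measure lebesgue (ball (0 :: real ^ 'n) R)"
      using R0 RR0 by blast
    then have "\<gamma>0 * measure lebesgue (ball (0::real^'n) R) < measure lebesgue (\<omega> \<inter> ball 0 R)"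
      using mbp by (simp add: pos_less_divide_eq)
    moreover have "\<gamma> * measure lebesgue (ball (0::real^'n) R) \<le> \<gamma>0 * measure lebesgue (ball (0::real^'n) R)"
      using gg mbp by (intro mult_right_mono) auto
    ultimately show "\<gamma> * measure lebesgue (ball (0::real^'n) R) \<le> measure lebesgue (\<omega> \<inter> ball 0 R)" by simp
  qed
  define G where "G = integral\<^sup>L lebesgue (\<lambda>x::real^'n. exp (- (norm x)\<^sup>2 / 2))"
  define V1 where "V1 = unit_ball_vol (DIM(real^'n)) * R1 ^ DIM(real^'n)"
  define \<rho> where "\<rho> = \<gamma> / (4 * 4 ^ DIM(real^'n))"
  define A where "A = 2 * G * exp (R1\<^sup>2) * exp 4 / (\<rho>\<^sup>2 * \<gamma> * V1)"
  define B where "B = exp 11 * 4 / \<rho>\<^sup>2"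
  define C where "C = max 2 (max (sqrt A) (ln B))"
  have Gnn: "G \<ge> 0" unfolding G_def by (intro Bochner_Integration.integral_nonneg) auto
  have V1p: "V1 > 0" unfolding V1_def using R1 by simp
  have \<rho>p: "\<rho> > 0" unfolding \<rho>_def using gp by simp
  have Ann: "A \<ge> 0" unfolding A_def using Gnn \<rho>p gp V1p by simp
  have Bp: "B > 0" unfolding B_def using \<rho>p by simp
  have C2: "C \<ge> 2" unfolding C_def by simp
  have CA: "A \<le> C\<^sup>2"
  proof -
    have "sqrt A \<le> C" unfolding C_def by simp
    then have "(sqrt A)\<^sup>2 \<le> C\<^sup>2" using Ann by (intro power_mono) auto
    then show ?thesis using Ann by simp
  qed
  have CB: "ln B \<le> 2 * C" unfolding C_def by simp
  have ABN: "A * B ^ N \<le> (C * exp (C * real N))\<^sup>2" for N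
  proof -
    have "B ^ N = exp (real N * ln B)" using Bp by (simp add: exp_of_nat_mult)
    also have "\<dots> \<le> exp (2 * C * real N)"
    proof -
      have "real N * ln B \<le> real N * (2 * C)" using CB by (intro mult_left_mono) auto
      then show ?thesis by (simp add: mult.commute)
    qed
    finally have "B ^ N \<le> exp (2 * C * real N)" .
    then have "A * B ^ N \<le> C\<^sup>2 * exp (2 * C * real N)"
      using CA Ann Bp by (intro mult_mono) auto
    also have "\<dots> = (C * exp (C * real N))\<^sup>2"
      by (simp add: power_mult_distrib power2_eq_square exp_add[symmetric])
    finally show ?thesis .
  qed
  show ?thesis
  proof (intro exI[of _ C] conjI allI ballI)
    show "C > 1" using C2 by simp
  next
    fix N :: nat and f :: "real^'n \<Rightarrow> complex"
    assume "f \<in> hermite_space N"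
    then obtain P where hp: "hpol N P" and fP: "f = (\<lambda>x. P x * complex_of_real (exp (- (norm x)\<^sup>2 / 2)))"
      using hermite_space_repr by blast
    define I where "I = (LINT x:UNIV|lebesgue. (cmod (f x))\<^sup>2)"
    define J where "J = (LINT x:\<omega>|lebesgue. (cmod (f x))\<^sup>2)"
    define \<Phi> where "\<Phi> = (real N + 1)\<^sup>2 * exp (2 * real N + 2) * exp (2 * real N) * G * 2 * exp (R1\<^sup>2 + real N) /
       (((\<gamma> / (4 * 4 ^ DIM(real^'n)))^(N+1) / ((real N + 1) * exp (real N + 1) * 2^N))\<^sup>2 * \<gamma> * V1)"
    have core': "I \<le> \<Phi> * J"
      unfolding I_def J_def \<Phi>_def G_def V1_def fP
      by (rule core[OF \<omega>m gp g2 R1 dens hp])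
    have \<Phi>b: "\<Phi> \<le> A * B ^ N"
      unfolding \<Phi>_def A_def B_def \<rho>_def[symmetric] by (rule Phi_bound[OF \<rho>p Gnn gp V1p])
    have Jnn: "J \<ge> 0" unfolding J_def set_lebesgue_integral_def
      by (intro Bochner_Integration.integral_nonneg) (auto simp: indicator_def)
    define Q where "Q = C * exp (C * real N)"
    have Qp: "Q \<ge> 0" unfolding Q_def using C2 by simp
    have "I \<le> Q\<^sup>2 * J"
    proof -
      have "\<Phi> \<le> Q\<^sup>2" using \<Phi>b ABN[of N] unfolding Q_def by linarith
      then have "\<Phi> * J \<le> Q\<^sup>2 * J" using Jnn by (rule mult_right_mono)
      then show ?thesis using core' by linarith
    qed
    then have "sqrt I \<le> sqrt (Q\<^sup>2 * J)" by (rule real_sqrt_le_mono)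
    also have "\<dots> = Q * sqrt J" using Qp by (simp add: real_sqrt_mult)
    finally show "L2_norm_on UNIV f \<le> C * exp (C * real N) * L2_norm_on \<omega> f"
      unfolding L2_norm_on_def I_def J_def Q_def .
  qed
qed


end
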